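(* For every integer $n \ge 0$, $$ \iint_{T} \frac{(-\ln (xy))^n}{xy}\,dx\,dy \;=\; n! \sum_{k=0}^n \zeta\big(n-k+2,\underbrace{1,\dots,1}_{k}\big), $$ where $T$ is the (closed) triangle in $\mathbb{R}^2$ with vertices $(1,0)$, $(0,1)$, $(1,1)$, i.e. $T=\{(x,y): 0\le x\le 1,\ 0\le y\le 1,\ x+y\ge 1\}$.
   Context: For integers $s_1\ge 2$ and $s_2,\dots,s_l\ge 1$, the multiple zeta value is $$ \zeta(s_1,\dots,s_l)=\sum_{n_1>n_2>\cdots>n_l\ge 1}\frac{1}{n_1^{s_1}\cdots n_l^{s_l}}. $$ In the sum, the $k=0$ term is the Riemann zeta value $\zeta(n+2)$. *)

theory Defs
  imports "HOL-Analysis.Analysis"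
begin

definition mzv_indices :: "nat \<Rightarrow> nat list set" where
  "mzv_indices l = {ns. length ns = l \<and> sorted_wrt (>) ns \<and> (\<forall>m\<in>set ns. m \<ge> 1)}"

definition mzv :: "nat list \<Rightarrow> real" where
  "mzv s = (\<Sum>\<^sub>\<infinity> ns \<in> mzv_indices (length s).
              (\<Prod>i<length s. 1 / real (ns ! i) ^ (s ! i)))"

definition triangle_T :: "(real \<times> real) set" where
  "triangle_T = {(x, y). 0 \<le> x \<and> x \<le> 1 \<and> 0 \<le> y \<and> y \<le> 1 \<and> x + y \<ge> 1}"

end

theory Submission
  imports Defs
begin

fun aa :: "nat \<Rightarrow> nat \<Rightarrow> real" where
  "aa 0 N = (if N = 0 then 1 else 0)"
| "aa (Suc j) N = (\<Sum>i<N. aa j i) / real N"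

lemma aa_nonneg: "0 \<le> aa j N"
  by (induction j arbitrary: N) (auto intro!: sum_nonneg divide_nonneg_nonneg)

definition WW :: "nat list \<Rightarrow> real" where
  "WW ns = (\<Prod>i<length ns. 1 / real (ns ! i))"

lemma WW_Cons: "WW (N # ns) = WW ns / real N"
  by (simp only: WW_def length_Cons prod.lessThan_Suc_shift) simp

definition EE :: "nat \<Rightarrow> nat \<Rightarrow> nat list set" where
  "EE j N = {ns \<in> mzv_indices j. \<forall>e\<in>set ns. e < N}"

definition DD :: "nat \<Rightarrow> nat \<Rightarrow> nat list set" where
  "DD j N = {ns \<in> mzv_indices j. hd ns = N}"

lemma finite_EE: "finite (EE j N)"
proof -
  have "EE j N \<subseteq> {xs. set xs \<subseteq> {..<N} \<and> length xs = j}"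
    by (auto simp: EE_def mzv_indices_def)
  then show ?thesis using finite_lists_length_eq[of "{..<N}" j] finite_subset by blast
qed

lemma mzv_indices_Suc_iff:
  "N # ns \<in> mzv_indices (Suc j) \<longleftrightarrow> ns \<in> mzv_indices j \<and> (\<forall>e\<in>set ns. e < N) \<and> N \<ge> 1"
  by (auto simp: mzv_indices_def)

lemma mzv_indices_Suc_ex: "ns \<in> mzv_indices (Suc j) \<Longrightarrow> \<exists>N ms. ns = N # ms"
  by (cases ns) (auto simp: mzv_indices_def)

lemma mzv_indices_le_hd: "N # ns \<in> mzv_indices j \<Longrightarrow> e \<in> set (N # ns) \<Longrightarrow> e \<le> N"
  by (auto simp: mzv_indices_def)

lemma mzv_indices_le_hd': "ns \<in> mzv_indices j \<Longrightarrow> e \<in> set ns \<Longrightarrow> e \<le> hd ns"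
  by (cases ns) (auto simp: mzv_indices_def)

lemma DD_eq: "DD (Suc j) N = (\<lambda>ns. N # ns) ` (if N \<ge> 1 then EE j N else {})"
proof (cases "N \<ge> 1")
  case True
  show ?thesis
  proof (intro set_eqI iffI)
    fix ns assume "ns \<in> DD (Suc j) N"
    then have h: "ns \<in> mzv_indices (Suc j)" "hd ns = N" by (auto simp: DD_def)
    then obtain M ms where ns: "ns = M # ms" using mzv_indices_Suc_ex by blast
    with h show "ns \<in> (\<lambda>ns. N # ns) ` (if N \<ge> 1 then EE j N else {})"
      using True by (auto simp: EE_def mzv_indices_Suc_iff)
  next
    fix ns assume "ns \<in> (\<lambda>ns. N # ns) ` (if N \<ge> 1 then EE j N else {})"
    then show "ns \<in> DD (Suc j) N"
      using True by (auto simp: EE_def DD_def mzv_indices_Suc_iff)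
  qed
next
  case False
  have "ns \<notin> DD (Suc j) N" for ns
  proof
    assume "ns \<in> DD (Suc j) N"
    then have h: "ns \<in> mzv_indices (Suc j)" "hd ns = N" by (auto simp: DD_def)
    then obtain M ms where ns: "ns = M # ms" using mzv_indices_Suc_ex by blast
    with h False show False by (auto simp: mzv_indices_Suc_iff)
  qed
  then show ?thesis using False by auto
qed

lemma finite_DD: "finite (DD (Suc j) N)"
  unfolding DD_eq using finite_EE by auto

lemma EE_sum: "N \<ge> 1 \<Longrightarrow> (\<Sum>ns\<in>EE j N. WW ns) = (\<Sum>i<N. aa j i)"
proof (induction j arbitrary: N)
  case 0
  have "EE 0 N = {[]}" by (auto simp: EE_def mzv_indices_def)
  moreover have "(\<Sum>i<N. aa 0 i) = 1"
    using 0 by (simp add: sum.If_cases lessThan_def)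
  ultimately show ?case by (simp add: WW_def)
next
  case (Suc j)
  have D: "(\<Sum>ns\<in>DD (Suc j) M. WW ns) = aa (Suc j) M" for M
  proof (cases "M \<ge> 1")
    case True
    have "(\<Sum>ns\<in>DD (Suc j) M. WW ns) = (\<Sum>ns\<in>EE j M. WW (M # ns))"
      unfolding DD_eq using True by (simp add: sum.reindex)
    also have "\<dots> = (\<Sum>ns\<in>EE j M. WW ns) / real M"
      by (simp add: WW_Cons sum_divide_distrib)
    also have "\<dots> = aa (Suc j) M" using Suc.IH[OF True] by simp
    finally show ?thesis .
  next
    case False
    then show ?thesis by (simp add: DD_eq)
  qed
  have "(\<Sum>ns\<in>EE (Suc j) N. WW ns) = (\<Sum>M<N. \<Sum>ns\<in>{ns \<in> EE (Suc j) N. hd ns = M}. WW ns)"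
    apply (rule sum.group[symmetric])
      apply (rule finite_EE)
     apply simp
    apply (auto simp: EE_def dest!: mzv_indices_Suc_ex)
    done
  also have "\<dots> = (\<Sum>M<N. \<Sum>ns\<in>DD (Suc j) M. WW ns)"
  proof (rule sum.cong)
    fix M assume "M \<in> {..<N}"
    then have "{ns \<in> EE (Suc j) N. hd ns = M} = DD (Suc j) M"
      by (auto simp: EE_def DD_def dest: mzv_indices_le_hd')
    then show "(\<Sum>ns\<in>{ns \<in> EE (Suc j) N. hd ns = M}. WW ns) = (\<Sum>ns\<in>DD (Suc j) M. WW ns)" by simp
  qed simp
  finally show ?case using D by simp
qed

lemma DD_sum: "(\<Sum>ns\<in>DD (Suc j) N. WW ns) = aa (Suc j) N"
proof (cases "N \<ge> 1")
  case True
  have "(\<Sum>ns\<in>DD (Suc j) N. WW ns) = (\<Sum>ns\<in>EE j N. WW (N # ns))"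
    unfolding DD_eq using True by (simp add: sum.reindex)
  also have "\<dots> = (\<Sum>ns\<in>EE j N. WW ns) / real N"
    by (simp add: WW_Cons sum_divide_distrib)
  also have "\<dots> = aa (Suc j) N" using EE_sum[OF True] by simp
  finally show ?thesis .
next
  case False
  then show ?thesis by (simp add: DD_eq)
qed


lemma sum_inv_sqrt_le: "(\<Sum>i\<in>{1..N}. 1 / sqrt (real i)) \<le> 2 * sqrt (real N)"
proof (induction N)
  case 0 then show ?case by simp
next
  case (Suc N)
  define a where "a = sqrt (real N)"
  define b where "b = sqrt (real (Suc N))"
  have a0: "0 \<le> a" and b0: "0 < b" by (auto simp: a_def b_def)
  have ab: "b^2 = a^2 + 1" by (simp add: a_def b_def)
  have "2 * a * b \<le> a^2 + b^2" by (smt (verit) sum_squares_bound)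
  then have "2 * a * b + 1 \<le> 2 * b^2" using ab by simp
  then have "(2 * a + 1 / b) * b \<le> (2 * b) * b" using b0 by (simp add: algebra_simps power2_eq_square)
  then have key: "2 * a + 1 / b \<le> 2 * b" using b0 by (simp add: mult_le_cancel_right)
  have "(\<Sum>i\<in>{1..Suc N}. 1 / sqrt (real i)) = (\<Sum>i\<in>{1..N}. 1 / sqrt (real i)) + 1 / b"
    by (simp add: b_def)
  also have "\<dots> \<le> 2 * a + 1 / b" using Suc.IH by (simp add: a_def)
  also have "\<dots> \<le> 2 * b" by (rule key)
  finally show ?case by (simp add: b_def)
qed

lemma aa_Suc_zero: "aa (Suc j) 0 = 0" by simp

lemma aa_bound: "N \<ge> 1 \<Longrightarrow> aa j N \<le> 2 ^ j / sqrt (real N)"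
proof (induction j arbitrary: N)
  case 0 then show ?case by simp
next
  case (Suc j)
  have S: "(\<Sum>i<N. aa j i) \<le> 2 ^ Suc j * sqrt (real N)"
  proof (cases j)
    case 0
    have "(\<Sum>i<N. aa j i) = 1" using Suc.prems 0 by (simp add: sum.If_cases lessThan_def)
    moreover have "1 \<le> sqrt (real N)" using Suc.prems by simp
    ultimately show ?thesis using 0 by (simp only: power_Suc power_0)
  next
    case (Suc j')
    have "(\<Sum>i<N. aa j i) = (\<Sum>i\<in>{1..<N}. aa j i)"
      using Suc by (intro sum.mono_neutral_right) auto
    also have "\<dots> \<le> (\<Sum>i\<in>{1..<N}. 2 ^ j * (1 / sqrt (real i)))"
      using Suc.IH by (intro sum_mono) auto
    also have "\<dots> = 2 ^ j * (\<Sum>i\<in>{1..<N}. 1 / sqrt (real i))" by (simp add: sum_distrib_left)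
    also have "\<dots> \<le> 2 ^ j * (\<Sum>i\<in>{1..N}. 1 / sqrt (real i))"
      by (intro mult_left_mono sum_mono2) auto
    also have "\<dots> \<le> 2 ^ j * (2 * sqrt (real N))"
      by (intro mult_left_mono sum_inv_sqrt_le) auto
    finally show ?thesis by simp
  qed
  have "aa (Suc j) N = (\<Sum>i<N. aa j i) / real N" by simp
  also have "\<dots> \<le> 2 ^ Suc j * sqrt (real N) / real N"
    using S Suc.prems by (intro divide_right_mono) auto
  also have "\<dots> = 2 ^ Suc j / sqrt (real N)"
    using Suc.prems by (simp add: field_simps)
  finally show ?case .
qed

declare aa.simps(2)[simp del]

lemma aa_series_summable: "summable (\<lambda>N. aa (Suc k) N / real N ^ (m + 1))"
proof (rule summable_comparison_test')
  show "summable (\<lambda>N. 2 ^ Suc k * real N powr (- (3/2)))"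
    by (intro summable_mult) (simp add: summable_real_powr_iff)
  fix N :: nat assume "N \<ge> 1"
  have nn: "0 \<le> aa (Suc k) N / real N ^ (m + 1)" by (intro divide_nonneg_nonneg aa_nonneg) auto
  have "aa (Suc k) N / real N ^ (m + 1) \<le> aa (Suc k) N / real N"
    using \<open>N \<ge> 1\<close> aa_nonneg[of "Suc k" N]
    by (intro divide_left_mono) (auto intro!: mult_pos_pos simp: self_le_power)
  also have "\<dots> \<le> 2 ^ Suc k / sqrt (real N) / real N"
    by (intro divide_right_mono aa_bound) (use \<open>N \<ge> 1\<close> in auto)
  also have "\<dots> = 2 ^ Suc k * real N powr (- (3/2))"
  proof -
    have "real N powr (3/2) = real N powr (1 + 1/2)" by simp
    also have "\<dots> = real N powr 1 * real N powr (1/2)" by (rule powr_add)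
    also have "\<dots> = real N * sqrt (real N)" using \<open>N \<ge> 1\<close> by (simp add: powr_half_sqrt)
    finally have h: "real N powr (- (3/2)) = 1 / (real N * sqrt (real N))"
      by (simp only: powr_minus_divide)
    show ?thesis unfolding h by simp
  qed
  finally show "norm (aa (Suc k) N / real N ^ (m + 1)) \<le> 2 ^ Suc k * real N powr (- (3/2))"
    using nn by simp
qed

lemma mzv_summand:
  assumes "ns \<in> mzv_indices (Suc k)"
  shows "(\<Prod>i<length ((m + 2) # replicate k 1). 1 / real (ns ! i) ^ (((m + 2) # replicate k 1) ! i))
         = WW ns / real (hd ns) ^ (m + 1)"
proof -
  obtain M ms where ns: "ns = M # ms" using mzv_indices_Suc_ex[OF assms] by blast
  have len: "length ms = k" using assms ns by (simp add: mzv_indices_def)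
  have "(\<Prod>i<length ((m + 2) # replicate k 1). 1 / real (ns ! i) ^ (((m + 2) # replicate k 1) ! i))
      = (1 / real M ^ (m + 2)) * (\<Prod>i<k. 1 / real (ms ! i))"
    by (simp only: length_Cons length_replicate prod.lessThan_Suc_shift) (simp add: ns)
  also have "\<dots> = WW ns / real (hd ns) ^ (m + 1)"
    by (simp only: ns WW_Cons list.sel(1)) (simp add: WW_def len field_simps)
  finally show ?thesis .
qed

lemma mzv_eq_series:
  "mzv ((m + 2) # replicate k 1) = (\<Sum>N. aa (Suc k) N / real N ^ (m + 1))"
proof -
  define s where "s = (m + 2) # replicate k 1"
  define g where "g ns = (\<Prod>i<length s. 1 / real (ns ! i) ^ (s ! i))" for ns
  define S where "S = (\<Sum>N. aa (Suc k) N / real N ^ (m + 1))"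
  have g_eq: "ns \<in> mzv_indices (Suc k) \<Longrightarrow> g ns = WW ns / real (hd ns) ^ (m + 1)" for ns
    unfolding g_def s_def by (rule mzv_summand)
  have fib: "(g has_sum (aa (Suc k) N / real N ^ (m + 1))) (DD (Suc k) N)" for N
  proof (rule has_sum_finiteI[OF finite_DD])
    have "sum g (DD (Suc k) N) = (\<Sum>ns\<in>DD (Suc k) N. WW ns / real N ^ (m + 1))"
      by (intro sum.cong) (auto simp: DD_def g_eq)
    also have "\<dots> = aa (Suc k) N / real N ^ (m + 1)"
      by (simp add: sum_divide_distrib[symmetric] DD_sum)
    finally show "aa (Suc k) N / real N ^ (m + 1) = sum g (DD (Suc k) N)" by simp
  qed
  have gnn: "ns \<in> mzv_indices (Suc k) \<Longrightarrow> 0 \<le> g ns" for ns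
    unfolding g_def by (intro prod_nonneg) auto
  have tot: "((\<lambda>N. aa (Suc k) N / real N ^ (m + 1)) has_sum S) UNIV"
    unfolding S_def
    by (intro sums_nonneg_imp_has_sum summable_sums aa_series_summable divide_nonneg_nonneg aa_nonneg) auto
  have summ: "(\<lambda>(N, ns). g ns) summable_on Sigma UNIV (DD (Suc k))"
  proof -
    have "(\<lambda>x. norm ((\<lambda>(N, ns). g ns) x)) summable_on Sigma UNIV (DD (Suc k))"
    proof (rule Infinite_Sum.abs_summable_on_Sigma_iff[THEN iffD2], intro conjI ballI)
      fix N :: nat
      show "(\<lambda>y. norm (case (N, y) of (N, ns) \<Rightarrow> g ns)) summable_on DD (Suc k) N"
        using finite_DD by (intro summable_on_finite) auto
    next
      have "(\<Sum>\<^sub>\<infinity>y\<in>DD (Suc k) N. norm (case (N, y) of (N, ns) \<Rightarrow> g ns)) = aa (Suc k) N / real N ^ (m + 1)" for N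
      proof -
        have "(\<Sum>\<^sub>\<infinity>y\<in>DD (Suc k) N. norm (case (N, y) of (N, ns) \<Rightarrow> g ns)) = (\<Sum>\<^sub>\<infinity>y\<in>DD (Suc k) N. g y)"
          by (intro infsum_cong) (auto simp: DD_def gnn)
        also have "\<dots> = aa (Suc k) N / real N ^ (m + 1)" using fib by (rule infsumI)
        finally show ?thesis .
      qed
      then have "(\<lambda>N. norm (\<Sum>\<^sub>\<infinity>y\<in>DD (Suc k) N. norm (case (N, y) of (N, ns) \<Rightarrow> g ns)))
           = (\<lambda>N. aa (Suc k) N / real N ^ (m + 1))"
        using aa_nonneg by (intro ext) simp
      then show "(\<lambda>N. norm (\<Sum>\<^sub>\<infinity>y\<in>DD (Suc k) N. norm (case (N, y) of (N, ns) \<Rightarrow> g ns))) summable_on UNIV"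
        using has_sum_imp_summable[OF tot] by simp
    qed
    then show ?thesis by (rule Infinite_Sum.abs_summable_summable)
  qed
  have "((\<lambda>(N, ns). g ns) has_sum S) (Sigma UNIV (DD (Suc k)))"
    by (rule has_sum_SigmaI[OF _ tot summ]) (use fib in simp_all)
  moreover have "bij_betw snd (Sigma UNIV (DD (Suc k))) (mzv_indices (Suc k))"
    by (rule bij_betwI[where g="\<lambda>ns. (hd ns, ns)"]) (auto simp: DD_def)
  ultimately have "(g has_sum S) (mzv_indices (Suc k))"
    using has_sum_reindex_bij_betw[of snd "Sigma UNIV (DD (Suc k))" "mzv_indices (Suc k)" g S]
    by (simp add: case_prod_unfold)
  then have "infsum g (mzv_indices (Suc k)) = S" by (rule infsumI)
  moreover have "mzv s = (\<Sum>\<^sub>\<infinity>ns\<in>mzv_indices (length s). g ns)" by (simp only: mzv_def g_def)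
  moreover have "length s = Suc k" by (simp add: s_def)
  ultimately show ?thesis by (simp only: s_def S_def)
qed


lemma ennreal_series_real:
  assumes nn: "\<And>i. 0 \<le> f i" and eq: "ennreal r = (\<Sum>i. ennreal (f i))" and r: "0 \<le> r"
  shows "summable f" "suminf f = r"
proof -
  show s: "summable f" using eq by (intro summable_suminf_not_top[OF nn]) (simp flip: eq)
  have "ennreal (suminf f) = ennreal r" using suminf_ennreal2[OF nn s] eq by simp
  then show "suminf f = r" using r s nn by (simp add: suminf_nonneg)
qed

lemma mono_FTC:
  assumes "0 \<le> x" "0 \<le> c"
  shows "(\<integral>\<^sup>+t. ennreal (c * t ^ P) * indicator {0..x} t \<partial>lborel) = ennreal (c * x ^ Suc P / real (Suc P))"
proof -
  have "(\<integral>\<^sup>+t. ennreal (c * t ^ P) * indicator {0..x} t \<partial>lborel)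
      = ennreal (c * x ^ Suc P / real (Suc P) - c * 0 ^ Suc P / real (Suc P))"
  proof (rule nn_integral_FTC_Icc[where F="\<lambda>t. c * t ^ Suc P / real (Suc P)"])
    show "(\<lambda>t. c * t ^ P) \<in> borel_measurable borel" by measurable
    show "((\<lambda>t. c * t ^ Suc P / real (Suc P)) has_real_derivative c * t ^ P) (at t)" for t
    proof -
      have "((\<lambda>t. c * t ^ Suc P / real (Suc P)) has_real_derivative c * (real (Suc P) * t ^ (Suc P - Suc 0)) / real (Suc P)) (at t)"
        by (intro DERIV_cdivide DERIV_cmult DERIV_pow)
      then show ?thesis by simp
    qed
    show "0 \<le> c * t ^ P" if "t \<in> {0..x}" for t using that assms by simp
    show "0 \<le> x" by fact
  qed
  then show ?thesis by simp
qed

lemma LL_series: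
  "0 \<le> (x::real) \<Longrightarrow> x < 1 \<Longrightarrow> ennreal ((- ln (1 - x)) ^ j / fact j) = (\<Sum>N. ennreal (aa j N * x ^ N))"
proof (induction j arbitrary: x)
  case 0
  have "(\<Sum>N. ennreal (aa 0 N * x ^ N)) = (\<Sum>N\<in>{0}. ennreal (aa 0 N * x ^ N))"
    by (rule suminf_finite) auto
  then show ?case by simp
next
  case (Suc j)
  define A where "A P = (\<Sum>i\<le>P. aa j i)" for P
  have A_nn: "0 \<le> A P" for P unfolding A_def by (intro sum_nonneg aa_nonneg)
  define f :: "real \<Rightarrow> real" where "f t = (- ln (1 - t)) ^ j / fact j / (1 - t)" for t
  have ser: "ennreal (f t) = (\<Sum>P. ennreal (A P * t ^ P))" if t: "0 \<le> t" "t < 1" for t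
  proof -
    have L0: "0 \<le> - ln (1 - t)" using t by simp
    have s1: "summable (\<lambda>i. aa j i * t ^ i)" and e1: "(\<Sum>i. aa j i * t ^ i) = (- ln (1 - t)) ^ j / fact j"
      using ennreal_series_real[OF _ Suc.IH[OF t]] aa_nonneg t L0 by auto
    have s2: "summable (\<lambda>i. t ^ i)" and e2: "(\<Sum>i. t ^ i) = 1 / (1 - t)"
      using t by (auto intro!: summable_geometric simp: suminf_geometric)
    have n1: "summable (\<lambda>i. norm (aa j i * t ^ i))" using s1 aa_nonneg t by simp
    have n2: "summable (\<lambda>i. norm (t ^ i))" using s2 t by simp
    have cp: "(\<Sum>i. aa j i * t ^ i) * (\<Sum>i. t ^ i) = (\<Sum>P. \<Sum>i\<le>P. aa j i * t ^ i * t ^ (P - i))"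
      by (rule Cauchy_product[OF n1 n2])
    have cs: "summable (\<lambda>P. \<Sum>i\<le>P. aa j i * t ^ i * t ^ (P - i))"
      by (rule summable_Cauchy_product[OF n1 n2])
    have inner: "(\<Sum>i\<le>P. aa j i * t ^ i * t ^ (P - i)) = A P * t ^ P" for P
      unfolding A_def sum_distrib_right
      by (intro sum.cong refl) (simp add: mult.assoc power_add[symmetric])
    have "f t = (\<Sum>P. A P * t ^ P)"
      using cp e1 e2 by (simp add: inner f_def)
    moreover have "summable (\<lambda>P. A P * t ^ P)" using cs by (simp add: inner)
    ultimately show ?thesis
      using A_nn t by (simp add: suminf_ennreal2)
  qed
  have Fderiv: "((\<lambda>t. (- ln (1 - t)) ^ Suc j / fact (Suc j)) has_real_derivative f t) (at t)"
    if "t < 1" for t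
  proof -
    have "((\<lambda>t. (- ln (1 - t)) ^ Suc j / fact (Suc j)) has_real_derivative
          (real (Suc j) * (- ln (1 - t)) ^ j * (1 / (1 - t))) / fact (Suc j)) (at t)"
    proof -
      have dL: "((\<lambda>t. - ln (1 - t)) has_real_derivative 1 / (1 - t)) (at t)"
        using that by (auto intro!: derivative_eq_intros)
      have "((\<lambda>t. (- ln (1 - t)) ^ Suc j) has_real_derivative
          real (Suc j) * (1 / (1 - t) * (- ln (1 - t)) ^ (Suc j - Suc 0))) (at t)"
        by (rule DERIV_power[OF dL])
      then show ?thesis by (intro DERIV_cdivide) (simp add: ac_simps)
    qed
    also have "(real (Suc j) * (- ln (1 - t)) ^ j * (1 / (1 - t))) / fact (Suc j) = f t"
    proof -
      have "(real (Suc j) * (- ln (1 - t)) ^ j * (1 / (1 - t))) / fact (Suc j)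
          = (real (Suc j) * ((- ln (1 - t)) ^ j * (1 / (1 - t)))) / (real (Suc j) * fact j)"
        by (simp only: fact_Suc of_nat_mult mult.assoc)
      also have "\<dots> = ((- ln (1 - t)) ^ j * (1 / (1 - t))) / fact j"
        by (rule nonzero_mult_divide_mult_cancel_left) simp
      also have "\<dots> = f t" by (simp add: f_def)
      finally show ?thesis .
    qed
    finally show ?thesis .
  qed
  have f_nn: "0 \<le> t \<Longrightarrow> t < 1 \<Longrightarrow> 0 \<le> f t" for t unfolding f_def by simp
  have "ennreal ((- ln (1 - x)) ^ Suc j / fact (Suc j))
      = (\<integral>\<^sup>+t. ennreal (f t) * indicator {0..x} t \<partial>lborel)"
  proof -
    have "(\<integral>\<^sup>+t. ennreal (f t) * indicator {0..x} t \<partial>lborel)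
        = ennreal ((- ln (1 - x)) ^ Suc j / fact (Suc j) - (- ln (1 - 0)) ^ Suc j / fact (Suc j))"
    proof (rule nn_integral_FTC_Icc[where F="\<lambda>t. (- ln (1 - t)) ^ Suc j / fact (Suc j)"])
      show "f \<in> borel_measurable borel" unfolding f_def by measurable
      show "((\<lambda>t. (- ln (1 - t)) ^ Suc j / fact (Suc j)) has_real_derivative f t) (at t)"
        if "t \<in> {0..x}" for t using Suc.prems that by (intro Fderiv) auto
      show "0 \<le> f t" if "t \<in> {0..x}" for t using Suc.prems that f_nn by auto
      show "0 \<le> x" by fact
    qed
    then show ?thesis by simp
  qed
  also have "\<dots> = (\<integral>\<^sup>+t. (\<Sum>P. ennreal (A P * t ^ P) * indicator {0..x} t) \<partial>lborel)"
    using Suc.prems by (intro nn_integral_cong) (auto simp: ser split: split_indicator)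
  also have "\<dots> = (\<Sum>P. \<integral>\<^sup>+t. ennreal (A P * t ^ P) * indicator {0..x} t \<partial>lborel)"
    by (rule nn_integral_suminf) measurable
  also have "\<dots> = (\<Sum>P. ennreal (A P * x ^ Suc P / real (Suc P)))"
  proof (intro suminf_cong)
    fix P
    show "(\<integral>\<^sup>+t. ennreal (A P * t ^ P) * indicator {0..x} t \<partial>lborel) = ennreal (A P * x ^ Suc P / real (Suc P))"
      using Suc.prems A_nn by (intro mono_FTC) auto
  qed
  also have "\<dots> = (\<Sum>P. ennreal (aa (Suc j) (Suc P) * x ^ Suc P))"
    by (intro suminf_cong) (simp add: aa.simps(2) A_def lessThan_Suc_atMost)
  also have "\<dots> = (\<Sum>N. ennreal (aa (Suc j) N * x ^ N))"
    using suminf_offset[of "\<lambda>N. ennreal (aa (Suc j) N * x ^ N)" 1] by (simp add: aa.simps(2))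
  finally show ?case .
qed


lemma clog_lim: "((\<lambda>x::real. (- ln x) ^ m * x) \<longlongrightarrow> 0) (at_right 0)"
proof -
  have lim1: "filterlim (\<lambda>x::real. - ln x) at_top (at_right 0)"
    by (rule filterlim_compose[OF filterlim_uminus_at_top_at_bot ln_at_0])
  have lim: "((\<lambda>x::real. (- ln x) ^ m / exp (- ln x)) \<longlongrightarrow> 0) (at_right 0)"
    by (rule filterlim_compose[OF tendsto_power_div_exp_0 lim1])
  have ev: "eventually (\<lambda>x::real. (- ln x) ^ m / exp (- ln x) = (- ln x) ^ m * x) (at_right 0)"
    using eventually_at_right_less[of "0::real"]
    by eventually_elim (simp add: exp_minus field_simps)
  show ?thesis using lim tendsto_cong[OF ev] by blast
qed

lemma clog_lim2: "((\<lambda>x::real. (- ln x) ^ m * x ^ Suc N) \<longlongrightarrow> 0) (at_right 0)"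
proof -
  have "((\<lambda>x::real. ((- ln x) ^ m * x) * x ^ N) \<longlongrightarrow> 0 * 0 ^ N) (at_right 0)"
    by (intro tendsto_mult clog_lim tendsto_power tendsto_ident_at)
  then show ?thesis by (simp add: mult.assoc)
qed

fun FF :: "nat \<Rightarrow> nat \<Rightarrow> real \<Rightarrow> real" where
  "FF N 0 x = x ^ Suc N / real (Suc N)"
| "FF N (Suc m) x = (- ln x) ^ Suc m * x ^ Suc N / real (Suc N) + real (Suc m) / real (Suc N) * FF N m x"

lemma FF_alg:
  fixes x c p :: real
  assumes "x \<noteq> 0"
  shows "(real (Suc m) * (- (1 / x) * c ^ m) * (x * p) + real (Suc N) * p * c ^ Suc m) / real (Suc N)
      + real (Suc m) / real (Suc N) * (c ^ m * p) = c ^ Suc m * p"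
proof -
  define K where "K = real (Suc N)"
  define a where "a = real (Suc m) * (c ^ m * p)"
  have K: "K \<noteq> 0" by (simp add: K_def)
  have 1: "real (Suc m) * (- (1 / x) * c ^ m) * (x * p) = - a"
    using assms by (simp add: a_def)
  have 2: "real (Suc m) / K * (c ^ m * p) = a / K" by (simp add: a_def)
  have "(- a + K * p * c ^ Suc m) / K + a / K = (K * (p * c ^ Suc m)) / K"
    by (simp add: add_divide_distrib[symmetric] mult.assoc)
  also have "\<dots> = c ^ Suc m * p" using K by simp
  finally show ?thesis using 1 2 by (simp add: K_def)
qed
lemma FF_deriv: "x > 0 \<Longrightarrow> (FF N m has_real_derivative (- ln x) ^ m * x ^ N) (at x)"
proof (induction m)
  case 0
  have "((\<lambda>x. x ^ Suc N / real (Suc N)) has_real_derivative real (Suc N) * x ^ (Suc N - Suc 0) / real (Suc N)) (at x)"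
    by (intro DERIV_cdivide DERIV_pow)
  moreover have "real (Suc N) * x ^ (Suc N - Suc 0) / real (Suc N) = (- ln x) ^ 0 * x ^ N"
    by (simp only: diff_Suc_Suc minus_nat.diff_0 power_0 mult_1_left) simp
  ultimately show ?case by (simp only: FF.simps(1)[abs_def])
next
  case (Suc m)
  have dc: "((\<lambda>x. - ln x) has_real_derivative - (1 / x)) (at x)"
    using Suc.prems by (auto intro!: derivative_eq_intros)
  have d1: "((\<lambda>x. (- ln x) ^ Suc m) has_real_derivative real (Suc m) * (- (1 / x) * (- ln x) ^ m)) (at x)"
    using DERIV_power[OF dc, of "Suc m"] by (simp only: diff_Suc_Suc minus_nat.diff_0)
  have d2: "((\<lambda>x. x ^ Suc N) has_real_derivative real (Suc N) * x ^ N) (at x)"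
    using DERIV_pow[of "Suc N"] by (simp only: diff_Suc_Suc minus_nat.diff_0)
  have d3: "((\<lambda>x. (- ln x) ^ Suc m * x ^ Suc N) has_real_derivative
      real (Suc m) * (- (1 / x) * (- ln x) ^ m) * x ^ Suc N + real (Suc N) * x ^ N * (- ln x) ^ Suc m) (at x)"
    by (rule DERIV_mult[OF d1 d2])
  have d4: "(FF N (Suc m) has_real_derivative
      (real (Suc m) * (- (1 / x) * (- ln x) ^ m) * x ^ Suc N + real (Suc N) * x ^ N * (- ln x) ^ Suc m) / real (Suc N)
      + real (Suc m) / real (Suc N) * ((- ln x) ^ m * x ^ N)) (at x)"
    unfolding FF.simps(2)[abs_def]
    by (intro DERIV_add DERIV_cdivide DERIV_cmult d3 Suc.IH Suc.prems)
  have "(real (Suc m) * (- (1 / x) * (- ln x) ^ m) * x ^ Suc N + real (Suc N) * x ^ N * (- ln x) ^ Suc m) / real (Suc N)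
      + real (Suc m) / real (Suc N) * ((- ln x) ^ m * x ^ N)
      = (- ln x) ^ Suc m * x ^ N"
    using FF_alg[where x=x and m=m and N=N and c="- ln x" and p="x ^ N"] Suc.prems
    by (simp only: power_Suc[of x N])
  with d4 show ?case by (simp only:)
qed

lemma FF_one: "FF N m 1 = fact m / real (Suc N) ^ Suc m"
proof (induction m)
  case 0 then show ?case by simp
next
  case (Suc m)
  have "FF N (Suc m) 1 = real (Suc m) / real (Suc N) * FF N m 1" by simp
  also have "\<dots> = real (Suc m) * fact m / (real (Suc N) * real (Suc N) ^ Suc m)"
    by (simp only: Suc.IH times_divide_times_eq)
  also have "\<dots> = fact (Suc m) / real (Suc N) ^ Suc (Suc m)"
    by (simp only: fact_Suc of_nat_mult power_Suc[of "real (Suc N)" "Suc m"])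
  finally show ?case .
qed

lemma FF_lim0: "(FF N m \<longlongrightarrow> 0) (at_right 0)"
proof (induction m)
  case 0
  have "((\<lambda>x::real. x ^ Suc N / real (Suc N)) \<longlongrightarrow> 0 ^ Suc N / real (Suc N)) (at_right 0)"
    by (intro tendsto_intros) (simp del: of_nat_Suc)
  moreover have "FF N 0 = (\<lambda>x::real. x ^ Suc N / real (Suc N))" by (rule ext) (simp only: FF.simps)
  ultimately show ?case by simp
next
  case (Suc m)
  have "((\<lambda>x. (- ln x) ^ Suc m * x ^ Suc N / real (Suc N) + real (Suc m) / real (Suc N) * FF N m x)
        \<longlongrightarrow> 0 / real (Suc N) + real (Suc m) / real (Suc N) * 0) (at_right 0)"
    by (intro tendsto_intros clog_lim2 Suc.IH) (simp del: of_nat_Suc)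
  moreover have "FF N (Suc m) = (\<lambda>x. (- ln x) ^ Suc m * x ^ Suc N / real (Suc N) + real (Suc m) / real (Suc N) * FF N m x)"
    by (rule ext) (simp only: FF.simps)
  ultimately show ?case by simp
qed


lemma J_int:
  "(\<integral>\<^sup>+x. ennreal ((- ln x) ^ m * x ^ N) * indicator {0<..<1} x \<partial>lborel)
     = ennreal (fact m / real (Suc N) ^ Suc m)"
proof -
  define g :: "real \<Rightarrow> real" where "g x = (- ln x) ^ m * x ^ N" for x
  define e :: "nat \<Rightarrow> real" where "e k = inverse (real (Suc k))" for k
  define f where "f k x = ennreal (g x) * indicator {e k..1} x" for k x
  have e_pos: "0 < e k" for k by (simp add: e_def)
  have int_k: "integral\<^sup>N lborel (f k) = ennreal (FF N m 1 - FF N m (e k))" for k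
    unfolding f_def
  proof (rule nn_integral_FTC_Icc)
    show "g \<in> borel_measurable borel" unfolding g_def by measurable
    show "(FF N m has_real_derivative g x) (at x)" if "x \<in> {e k..1}" for x
      using that e_pos[of k] unfolding g_def by (intro FF_deriv) auto
    show "0 \<le> g x" if "x \<in> {e k..1}" for x
      using that e_pos[of k] unfolding g_def by (auto intro!: mult_nonneg_nonneg zero_le_power)
    show "e k \<le> 1" unfolding e_def by (rule inverse_le_1_iff[THEN iffD2]) simp
  qed
  have lim1: "(\<lambda>k. integral\<^sup>N lborel (f k)) \<longlonglongrightarrow> (\<integral>\<^sup>+x. ennreal (g x) * indicator {0<..1} x \<partial>lborel)"
  proof (rule nn_integral_LIMSEQ)
    show "incseq f"
    proof (intro incseq_SucI le_funI)
      fix k x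
      have "e (Suc k) \<le> e k" by (simp add: e_def field_simps)
      then show "f k x \<le> f (Suc k) x"
        unfolding f_def by (auto split: split_indicator)
    qed
    show "f k \<in> borel_measurable lborel" for k unfolding f_def g_def by measurable
    show "(\<lambda>k. f k x) \<longlonglongrightarrow> ennreal (g x) * indicator {0<..1} x" for x
    proof (cases "x > 0")
      case True
      obtain n where n: "inverse (real (Suc n)) < x" using reals_Archimedean[OF True] by blast
      have "eventually (\<lambda>k. f k x = ennreal (g x) * indicator {0<..1} x) sequentially"
      proof (rule eventually_sequentiallyI[of n])
        fix k assume "n \<le> k"
        then have "e k \<le> inverse (real (Suc n))" by (simp add: e_def field_simps)
        then show "f k x = ennreal (g x) * indicator {0<..1} x"
          using n True unfolding f_def by (auto split: split_indicator)
      qed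
      then show ?thesis by (rule tendsto_eventually)
    next
      case False
      then have "f k x = ennreal (g x) * indicator {0<..1} x" for k
        using e_pos[of k] unfolding f_def by (auto split: split_indicator)
      then show ?thesis by simp
    qed
  qed
  have lim_e: "filterlim e (at_right 0) sequentially"
    unfolding e_def by (rule tendsto_imp_filterlim_at_right[OF LIMSEQ_inverse_real_of_nat]) simp
  have lim2: "(\<lambda>k. ennreal (FF N m 1 - FF N m (e k))) \<longlonglongrightarrow> ennreal (FF N m 1 - 0)"
    by (intro tendsto_ennrealI tendsto_diff tendsto_const filterlim_compose[OF FF_lim0 lim_e])
  have "(\<integral>\<^sup>+x. ennreal (g x) * indicator {0<..1} x \<partial>lborel) = ennreal (FF N m 1)"
    using LIMSEQ_unique[OF lim1] lim2 int_k by simp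
  moreover have "(\<integral>\<^sup>+x. ennreal (g x) * indicator {0<..<1} x \<partial>lborel)
      = (\<integral>\<^sup>+x. ennreal (g x) * indicator {0<..1} x \<partial>lborel)"
    by (intro nn_integral_cong_AE, use AE_lborel_singleton[of "1::real"] in eventually_elim)
       (auto split: split_indicator)
  ultimately show ?thesis by (simp add: g_def FF_one)
qed


lemma ennreal_suminf_shift0:
  fixes h :: "nat \<Rightarrow> ennreal"
  assumes "h 0 = 0"
  shows "(\<Sum>N. h (Suc N)) = (\<Sum>N. h N)"
  using suminf_offset[of h 1] assms by simp

lemma K_int:
  "(\<integral>\<^sup>+x. ennreal ((- ln x) ^ m * (- ln (1 - x)) ^ Suc k / x) * indicator {0<..<1} x \<partial>lborel)
     = ennreal (fact m * fact (Suc k) * mzv ((m + 2) # replicate k 1))"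
proof -
  define C where "C N = fact (Suc k) * aa (Suc k) (Suc N)" for N
  have C_nn: "0 \<le> C N" for N unfolding C_def by (simp add: aa_nonneg)
  define h where "h N = aa (Suc k) N / real N ^ (m + 1)" for N
  have h_nn: "0 \<le> h N" for N unfolding h_def by (simp add: aa_nonneg)
  have pw: "ennreal ((- ln x) ^ m * (- ln (1 - x)) ^ Suc k / x)
      = (\<Sum>N. ennreal (C N) * ennreal ((- ln x) ^ m * x ^ N))" if x: "0 < x" "x < 1" for x
  proof -
    have c0: "0 \<le> - ln x" using x by simp
    have L0: "0 \<le> - ln (1 - x)" using x by simp
    define a where "a = fact (Suc k) * (- ln x) ^ m / x"
    have a0: "0 \<le> a" unfolding a_def using x c0 by simp
    have "ennreal ((- ln x) ^ m * (- ln (1 - x)) ^ Suc k / x)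
        = ennreal a * ennreal ((- ln (1 - x)) ^ Suc k / fact (Suc k))"
    proof -
      have F: "(fact (Suc k) :: real) \<noteq> 0" by (rule fact_nonzero)
      have eq: "(- ln x) ^ m * (- ln (1 - x)) ^ Suc k / x = a * ((- ln (1 - x)) ^ Suc k / fact (Suc k))"
        unfolding a_def using F by (simp add: field_simps del: fact_Suc)
      show ?thesis unfolding eq by (rule ennreal_mult'[OF a0])
    qed
    also have "\<dots> = ennreal a * (\<Sum>N. ennreal (aa (Suc k) N * x ^ N))"
      using x LL_series[of x "Suc k"] by simp
    also have "\<dots> = (\<Sum>N. ennreal a * ennreal (aa (Suc k) N * x ^ N))"
      by simp
    also have "\<dots> = (\<Sum>N. ennreal a * ennreal (aa (Suc k) (Suc N) * x ^ Suc N))"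
      by (rule ennreal_suminf_shift0[symmetric]) (simp add: aa.simps(2))
    also have "\<dots> = (\<Sum>N. ennreal (C N) * ennreal ((- ln x) ^ m * x ^ N))"
    proof (intro suminf_cong)
      fix N
      have "a * (aa (Suc k) (Suc N) * x ^ Suc N) = C N * ((- ln x) ^ m * x ^ N)"
        using x by (simp add: a_def C_def field_simps)
      then show "ennreal a * ennreal (aa (Suc k) (Suc N) * x ^ Suc N) = ennreal (C N) * ennreal ((- ln x) ^ m * x ^ N)"
        using a0 C_nn[of N] x c0 aa_nonneg[of "Suc k" "Suc N"]
        by (simp add: ennreal_mult''[symmetric])
    qed
    finally show ?thesis .
  qed
  have "(\<integral>\<^sup>+x. ennreal ((- ln x) ^ m * (- ln (1 - x)) ^ Suc k / x) * indicator {0<..<1} x \<partial>lborel)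
      = (\<integral>\<^sup>+x. (\<Sum>N. ennreal (C N) * (ennreal ((- ln x) ^ m * x ^ N) * indicator {0<..<1} x)) \<partial>lborel)"
  proof (intro nn_integral_cong)
    fix x :: real
    show "ennreal ((- ln x) ^ m * (- ln (1 - x)) ^ Suc k / x) * indicator {0<..<1} x
        = (\<Sum>N. ennreal (C N) * (ennreal ((- ln x) ^ m * x ^ N) * indicator {0<..<1} x))"
    proof (cases "0 < x \<and> x < 1")
      case True
      then have "indicator {0<..<1} x = (1::ennreal)" by simp
      then show ?thesis using pw[of x] True by (simp only: mult_1_right)
    next
      case False
      then have "indicator {0<..<1} x = (0::ennreal)" by simp
      then show ?thesis by simp
    qed
  qed
  also have "\<dots> = (\<Sum>N. \<integral>\<^sup>+x. ennreal (C N) * (ennreal ((- ln x) ^ m * x ^ N) * indicator {0<..<1} x) \<partial>lborel)"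
    by (rule nn_integral_suminf) measurable
  also have "\<dots> = (\<Sum>N. ennreal (C N) * ennreal (fact m / real (Suc N) ^ Suc m))"
    by (intro suminf_cong) (simp add: nn_integral_cmult J_int)
  also have "\<dots> = (\<Sum>N. ennreal (fact m * fact (Suc k)) * ennreal (h (Suc N)))"
  proof (intro suminf_cong)
    fix N
    have "C N * (fact m / real (Suc N) ^ Suc m) = fact m * fact (Suc k) * h (Suc N)"
      by (simp add: C_def h_def field_simps del: of_nat_Suc fact_Suc)
    then show "ennreal (C N) * ennreal (fact m / real (Suc N) ^ Suc m) = ennreal (fact m * fact (Suc k)) * ennreal (h (Suc N))"
      using C_nn[of N] h_nn[of "Suc N"] by (simp add: ennreal_mult''[symmetric] del: fact_Suc)
  qed
  also have "\<dots> = (\<Sum>N. ennreal (fact m * fact (Suc k)) * ennreal (h N))"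
    by (rule ennreal_suminf_shift0) (simp add: h_def aa.simps(2))
  also have "\<dots> = ennreal (fact m * fact (Suc k)) * ennreal (suminf h)"
  proof -
    have sh: "summable h" unfolding h_def by (rule aa_series_summable)
    show ?thesis by (simp only: ennreal_suminf_cmult suminf_ennreal2[OF h_nn sh])
  qed
  also have "\<dots> = ennreal (fact m * fact (Suc k) * mzv ((m + 2) # replicate k 1))"
  proof -
    have "suminf h = mzv ((m + 2) # replicate k 1)"
      unfolding h_def by (rule mzv_eq_series[symmetric])
    moreover have "(0::real) \<le> fact m * fact (Suc k)" by simp
    ultimately show ?thesis by (simp only: ennreal_mult'[symmetric])
  qed
  finally show ?thesis .
qed


definition Hx :: "nat \<Rightarrow> real \<Rightarrow> real" where
  "Hx n x = ((- ln x + - ln (1 - x)) ^ Suc n - (- ln x) ^ Suc n) / (real (Suc n) * x)"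

lemma inner_has_integral:
  assumes x: "0 < x" "x < 1"
  shows "((\<lambda>y. (- ln x - ln y) ^ n / (x * y)) has_integral Hx n x) {1 - x..1}"
proof -
  define G where "G y = - (((- ln x - ln y) ^ Suc n) / (real (Suc n) * x))" for y
  have d: "(G has_real_derivative (- ln x - ln y) ^ n / (x * y)) (at y)" if y: "0 < y" for y
  proof -
    have dc: "((\<lambda>y. - ln x - ln y) has_real_derivative - (1 / y)) (at y)"
      using y by (auto intro!: derivative_eq_intros)
    have "((\<lambda>y. (- ln x - ln y) ^ Suc n) has_real_derivative real (Suc n) * (- (1 / y) * (- ln x - ln y) ^ (Suc n - Suc 0))) (at y)"
      by (rule DERIV_power[OF dc])
    then have "(G has_real_derivative - (real (Suc n) * (- (1 / y) * (- ln x - ln y) ^ (Suc n - Suc 0)) / (real (Suc n) * x))) (at y)"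
      unfolding G_def[abs_def] by (intro DERIV_cdivide DERIV_minus)
    moreover have "- (real (Suc n) * (- (1 / y) * (- ln x - ln y) ^ (Suc n - Suc 0)) / (real (Suc n) * x))
        = (- ln x - ln y) ^ n / (x * y)"
    proof -
      have nz: "real (Suc n) \<noteq> 0" by (simp del: of_nat_Suc)
      show ?thesis using nz x y by (simp del: of_nat_Suc add: field_simps)
    qed
    ultimately show ?thesis by (simp only:)
  qed
  have "((\<lambda>y. (- ln x - ln y) ^ n / (x * y)) has_integral G 1 - G (1 - x)) {1 - x..1}"
  proof (rule fundamental_theorem_of_calculus)
    show "1 - x \<le> 1" using x by simp
    fix y assume "y \<in> {1 - x..1}"
    then have "0 < y" using x by auto
    then show "(G has_vector_derivative (- ln x - ln y) ^ n / (x * y)) (at y within {1 - x..1})"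
      using d by (simp add: has_real_derivative_iff_has_vector_derivative[symmetric] has_field_derivative_at_within)
  qed
  moreover have "G 1 - G (1 - x) = Hx n x"
    unfolding G_def Hx_def by (simp add: diff_divide_distrib add_divide_distrib)
  ultimately show ?thesis by simp
qed


lemma mzv_nonneg: "0 \<le> mzv s"
  unfolding mzv_def by (intro infsum_nonneg prod_nonneg) auto

lemma Hx_expand:
  assumes x: "0 < x" "x < 1"
  shows "Hx n x = (\<Sum>k\<le>n. real (Suc n choose Suc k) / real (Suc n) *
                     ((- ln x) ^ (n - k) * (- ln (1 - x)) ^ Suc k / x))"
proof -
  define c where "c = - ln x"
  define L where "L = - ln (1 - x)"
  have "(c + L) ^ Suc n = (\<Sum>j\<le>Suc n. real (Suc n choose j) * L ^ j * c ^ (Suc n - j))"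
    using binomial_ring[of L c "Suc n"] by (simp add: add.commute)
  also have "\<dots> = c ^ Suc n + (\<Sum>k\<le>n. real (Suc n choose Suc k) * L ^ Suc k * c ^ (n - k))"
    by (simp only: sum.atMost_Suc_shift) simp
  finally have "(c + L) ^ Suc n - c ^ Suc n = (\<Sum>k\<le>n. real (Suc n choose Suc k) * L ^ Suc k * c ^ (n - k))"
    by simp
  then have "Hx n x = (\<Sum>k\<le>n. real (Suc n choose Suc k) * L ^ Suc k * c ^ (n - k)) / (real (Suc n) * x)"
    unfolding Hx_def c_def L_def by simp
  also have "\<dots> = (\<Sum>k\<le>n. real (Suc n choose Suc k) / real (Suc n) * (c ^ (n - k) * L ^ Suc k / x))"
    by (simp add: sum_divide_distrib ac_simps del: binomial_Suc_Suc)
  finally show ?thesis by (simp add: c_def L_def)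
qed

lemma coef_identity:
  assumes "k \<le> n"
  shows "real (Suc n choose Suc k) / real (Suc n) * (fact (n - k) * fact (Suc k)) = (fact n :: real)"
proof -
  have "fact (Suc k) * fact (Suc n - Suc k) * (Suc n choose Suc k) = (fact (Suc n) :: nat)"
    using assms by (intro binomial_fact_lemma) simp
  then have "real (fact (Suc k) * fact (n - k) * (Suc n choose Suc k)) = real (fact (Suc n))"
    by simp
  then have e: "fact (Suc k) * fact (n - k) * real (Suc n choose Suc k) = (fact (Suc n) :: real)"
    by (simp only: of_nat_mult of_nat_fact)
  have "real (Suc n choose Suc k) / real (Suc n) * (fact (n - k) * fact (Suc k))
      = (fact (Suc k) * fact (n - k) * real (Suc n choose Suc k)) / real (Suc n)"
    by (simp add: ac_simps)
  also have "\<dots> = fact (Suc n) / real (Suc n)" by (simp only: e)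
  also have "\<dots> = fact n" by (simp del: of_nat_Suc add: fact_Suc)
  finally show ?thesis .
qed

lemma Hx_nn_integral:
  "(\<integral>\<^sup>+x. ennreal (Hx n x) * indicator {0<..<1} x \<partial>lborel)
     = ennreal (fact n * (\<Sum>k = 0..n. mzv ((n - k + 2) # replicate k 1)))"
proof -
  define cf where "cf k = real (Suc n choose Suc k) / real (Suc n)" for k
  define T :: "nat \<Rightarrow> real \<Rightarrow> real" where "T k x = (- ln x) ^ (n - k) * (- ln (1 - x)) ^ Suc k / x" for k x
  have cf_nn: "0 \<le> cf k" for k by (simp add: cf_def)
  have T_nn: "0 < x \<Longrightarrow> x < 1 \<Longrightarrow> 0 \<le> T k x" for k x
    unfolding T_def by (intro divide_nonneg_nonneg mult_nonneg_nonneg zero_le_power) auto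
  have "(\<integral>\<^sup>+x. ennreal (Hx n x) * indicator {0<..<1} x \<partial>lborel)
      = (\<integral>\<^sup>+x. (\<Sum>k\<le>n. ennreal (cf k) * (ennreal (T k x) * indicator {0<..<1} x)) \<partial>lborel)"
  proof (intro nn_integral_cong)
    fix x :: real
    show "ennreal (Hx n x) * indicator {0<..<1} x = (\<Sum>k\<le>n. ennreal (cf k) * (ennreal (T k x) * indicator {0<..<1} x))"
    proof (cases "0 < x \<and> x < 1")
      case True
      have "Hx n x = (\<Sum>k\<le>n. cf k * T k x)"
        using Hx_expand[of x n] True by (simp only: cf_def T_def)
      then have "ennreal (Hx n x) = (\<Sum>k\<le>n. ennreal (cf k * T k x))"
        using cf_nn T_nn True by (simp add: sum_ennreal)
      also have "\<dots> = (\<Sum>k\<le>n. ennreal (cf k) * ennreal (T k x))"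
        using cf_nn by (simp add: ennreal_mult')
      finally show ?thesis using True by simp
    next
      case False
      then show ?thesis by simp
    qed
  qed
  also have "\<dots> = (\<Sum>k\<le>n. \<integral>\<^sup>+x. ennreal (cf k) * (ennreal (T k x) * indicator {0<..<1} x) \<partial>lborel)"
    by (rule nn_integral_sum) (simp add: T_def)
  also have "\<dots> = (\<Sum>k\<le>n. ennreal (cf k) * ennreal (fact (n - k) * fact (Suc k) * mzv ((n - k + 2) # replicate k 1)))"
  proof (intro sum.cong refl)
    fix k
    have "(\<integral>\<^sup>+x. ennreal (cf k) * (ennreal (T k x) * indicator {0<..<1} x) \<partial>lborel)
        = ennreal (cf k) * (\<integral>\<^sup>+x. ennreal (T k x) * indicator {0<..<1} x \<partial>lborel)"
      by (rule nn_integral_cmult) (simp add: T_def)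
    also have "(\<integral>\<^sup>+x. ennreal (T k x) * indicator {0<..<1} x \<partial>lborel)
        = ennreal (fact (n - k) * fact (Suc k) * mzv ((n - k + 2) # replicate k 1))"
      unfolding T_def by (rule K_int)
    finally show "(\<integral>\<^sup>+x. ennreal (cf k) * (ennreal (T k x) * indicator {0<..<1} x) \<partial>lborel)
        = ennreal (cf k) * ennreal (fact (n - k) * fact (Suc k) * mzv ((n - k + 2) # replicate k 1))" .
  qed
  also have "\<dots> = (\<Sum>k\<le>n. ennreal (fact n * mzv ((n - k + 2) # replicate k 1)))"
  proof (intro sum.cong refl)
    fix k assume "k \<in> {..n}"
    then have ci: "cf k * (fact (n - k) * fact (Suc k)) = fact n"
      using coef_identity[of k n] by (simp add: cf_def del: fact_Suc)
    have eq: "cf k * (fact (n - k) * fact (Suc k) * mzv ((n - k + 2) # replicate k 1))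
        = fact n * mzv ((n - k + 2) # replicate k 1)"
      using ci by (metis mult.assoc)
    show "ennreal (cf k) * ennreal (fact (n - k) * fact (Suc k) * mzv ((n - k + 2) # replicate k 1))
        = ennreal (fact n * mzv ((n - k + 2) # replicate k 1))"
      unfolding eq[symmetric] by (rule ennreal_mult'[symmetric, OF cf_nn])
  qed
  also have "\<dots> = ennreal (\<Sum>k\<le>n. fact n * mzv ((n - k + 2) # replicate k 1))"
    using mzv_nonneg by (intro sum_ennreal) simp
  also have "\<dots> = ennreal (fact n * (\<Sum>k = 0..n. mzv ((n - k + 2) # replicate k 1)))"
    by (simp add: sum_distrib_left atLeast0AtMost)
  finally show ?thesis .
qed


lemma triangle_T_borel: "triangle_T \<in> sets (borel :: (real \<times> real) measure)"
proof -
  have "triangle_T = {p. 0 \<le> fst p} \<inter> {p. fst p \<le> 1} \<inter> {p. 0 \<le> snd p} \<inter> {p. snd p \<le> 1} \<inter> {p. 1 \<le> fst p + snd p}"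
    by (auto simp: triangle_T_def)
  also have "\<dots> \<in> sets borel"
    by (intro borel_closed closed_Int closed_Collect_le continuous_intros)
  finally show ?thesis .
qed

theorem theorem1:
  fixes n :: nat
  defines "f \<equiv> (\<lambda>(x::real, y::real). (- ln (x * y)) ^ n / (x * y))"
  shows "set_integrable lborel triangle_T f \<and>
         (\<integral>p\<in>triangle_T. f p \<partial>lborel) =
           fact n * (\<Sum>k = 0..n. mzv ((n - k + 2) # replicate k 1))"
proof -
  define R where "R = fact n * (\<Sum>k = 0..n. mzv ((n - k + 2) # replicate k 1))"
  have R_nn: "0 \<le> R" unfolding R_def using mzv_nonneg by (intro mult_nonneg_nonneg sum_nonneg) auto
  define F where "F p = indicator triangle_T p * f p" for p
  have h_meas[measurable]: "(\<lambda>p::real\<times>real. fst p * snd p) \<in> borel_measurable borel"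
    by (intro borel_measurable_continuous_onI continuous_intros)
  have f_eq: "f = (\<lambda>p. (- ln (fst p * snd p)) ^ n / (fst p * snd p))"
    by (auto simp: f_def case_prod_beta)
  have f_meas[measurable]: "f \<in> borel_measurable borel" unfolding f_eq by measurable
  have T_meas[measurable]: "triangle_T \<in> sets borel" by (rule triangle_T_borel)
  have F_meas[measurable]: "F \<in> borel_measurable borel" unfolding F_def by measurable
  have F_nn: "0 \<le> F p" for p
  proof (cases "p \<in> triangle_T")
    case True
    obtain x y where p: "p = (x, y)" by (cases p)
    with True have xy: "0 \<le> x" "x \<le> 1" "0 \<le> y" "y \<le> 1" by (auto simp: triangle_T_def)
    have "0 \<le> f p"
    proof (cases "x * y = 0")
      case True then show ?thesis by (simp only: f_def p case_prod_conv) simp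
    next
      case False
      then have "0 < x * y" using xy by (simp add: zero_less_mult_iff less_le)
      moreover have "x * y \<le> 1" using xy by (simp add: mult_le_one)
      ultimately have "0 \<le> - ln (x * y)" by simp
      with \<open>0 < x * y\<close> show ?thesis by (simp add: f_def p)
    qed
    then show ?thesis by (simp add: F_def True)
  qed (simp add: F_def)
  have inner: "(\<integral>\<^sup>+y. ennreal (F (x, y)) \<partial>lborel) = ennreal (Hx n x) * indicator {0<..<1} x"
    if "x \<noteq> 1" for x
  proof (cases "0 < x \<and> x < 1")
    case True
    define g where "g y = (- ln x - ln y) ^ n / (x * y)" for y
    have "(\<integral>\<^sup>+y. ennreal (F (x, y)) \<partial>lborel) = (\<integral>\<^sup>+y. ennreal (indicator {1 - x..1} y * g y) \<partial>lborel)"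
    proof (intro nn_integral_cong)
      fix y :: real
      show "ennreal (F (x, y)) = ennreal (indicator {1 - x..1} y * g y)"
      proof (cases "y \<in> {1 - x..1}")
        case yin: True
        then have "(x, y) \<in> triangle_T" using True by (auto simp: triangle_T_def)
        moreover have "0 < y" using yin True by auto
        ultimately show ?thesis using True yin by (simp add: F_def f_def g_def ln_mult)
      next
        case False
        then have "(x, y) \<notin> triangle_T" by (auto simp: triangle_T_def)
        then show ?thesis using False by (simp add: F_def)
      qed
    qed
    also have "\<dots> = ennreal (Hx n x)"
    proof (rule nn_integral_has_integral_lebesgue)
      show "0 \<le> g y" if "y \<in> {1 - x..1}" for y
      proof -
        have y: "0 < y" "y \<le> 1" using that True by auto
        have "ln y \<le> 0" "ln x \<le> 0" using y True by auto
        then have "0 \<le> - ln x - ln y" by simp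
        then show ?thesis unfolding g_def using y True
          by (intro divide_nonneg_nonneg zero_le_power) auto
      qed
      show "(g has_integral Hx n x) {1 - x..1}"
        unfolding g_def using True by (intro inner_has_integral) auto
    qed
    finally show ?thesis using True by simp
  next
    case False
    have "F (x, y) = 0" for y
    proof (cases "x = 0")
      case True then show ?thesis by (simp add: F_def f_def)
    next
      case False
      with \<open>\<not> (0 < x \<and> x < 1)\<close> that have "(x, y) \<notin> triangle_T" by (auto simp: triangle_T_def)
      then show ?thesis by (simp add: F_def)
    qed
    then show ?thesis using False by simp
  qed
  have main: "(\<integral>\<^sup>+p. ennreal (F p) \<partial>lborel) = ennreal R"
  proof -
    have m2: "(\<lambda>p. ennreal (F p)) \<in> borel_measurable (lborel \<Otimes>\<^sub>M lborel)"
      by (simp only: lborel_prod) measurable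
    have "(\<integral>\<^sup>+p. ennreal (F p) \<partial>lborel) = (\<integral>\<^sup>+p. ennreal (F p) \<partial>(lborel \<Otimes>\<^sub>M lborel))"
      by (simp only: lborel_prod)
    also have "\<dots> = (\<integral>\<^sup>+x. \<integral>\<^sup>+y. ennreal (F (x, y)) \<partial>lborel \<partial>lborel)"
      by (rule lborel.nn_integral_fst[OF m2, symmetric])
    also have "\<dots> = (\<integral>\<^sup>+x. ennreal (Hx n x) * indicator {0<..<1} x \<partial>lborel)"
      by (intro nn_integral_cong_AE, use AE_lborel_singleton[of "1::real"] in eventually_elim)
         (simp add: inner)
    also have "\<dots> = ennreal R" unfolding R_def by (rule Hx_nn_integral)
    finally show ?thesis .
  qed
  have int: "integrable lborel F"
    by (rule integrableI_nonneg) (use F_nn main in \<open>auto\<close>)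
  have si: "set_integrable lborel triangle_T f"
    using int unfolding set_integrable_def F_def by simp
  have "ennreal (integral\<^sup>L lborel F) = ennreal R"
    using nn_integral_eq_integral[OF int] F_nn main by simp
  then have "integral\<^sup>L lborel F = R"
    using R_nn F_nn by (simp add: integral_nonneg)
  then have "(\<integral>p\<in>triangle_T. f p \<partial>lborel) = R"
    unfolding set_lebesgue_integral_def F_def by simp
  then show ?thesis using si unfolding R_def by simp
qed


end
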